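(* Let $N,Q,S\ge 1$ be integers, let $\mathbf{H}\in\mathbb{R}^{Q\times N}$ with $\mathbf{H}\neq\mathbf{0}$, $\mathbf{y}\in\mathbb{R}^Q$, let $\mathbf{V}_0$ be a real matrix with $N$ columns, and for each $s\in\{1,\dots,S\}$ let $P_s\ge1$, $\mathbf{V}_s\in\mathbb{R}^{P_s\times N}$ and $\mathbf{c}_s\in\mathbb{R}^{P_s}$. Let $\Phi:\mathbb{R}^Q\to\mathbb{R}$ and, for every $\delta>0$ and $s\in\{1,\dots,S\}$, $\psi_{s,\delta}:\mathbb{R}\to\mathbb{R}$. For $\delta>0$ define $$F_\delta(\mathbf{x})=\Phi(\mathbf{H}\mathbf{x}-\mathbf{y})+\sum_{s=1}^S\psi_{s,\delta}(\|\mathbf{V}_s\mathbf{x}-\mathbf{c}_s\|)+\|\mathbf{V}_0\mathbf{x}\|^2,\qquad \mathbf{x}\in\mathbb{R}^N.$$ Assume: (i) $\Phi$ is continuous and coercive ($\lim_{\|\mathbf{z}\|\to+\infty}\Phi(\mathbf{z})=+\infty$); (ii) for every $\delta>0$ and every $s\in\{1,\dots,S\}$, $\psi_{s,\delta}$ is continuous and takes nonnegative values; (iii) $\operatorname{Ker}\mathbf{H}\cap\operatorname{Ker}\mathbf{V}_0=\{\mathbf{0}\}$. Then, for every $\delta>0$, (i) $F_\delta$ is coercive, and (ii) the set of minimizers of $F_\delta$ is nonempty and compact.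
   Context: $\|\cdot\|$ denotes the Euclidean norm. *)

theory Defs
  imports "HOL-Analysis.Analysis"
begin

text \<open>The matrix V_s (P_s x N) is given by its rows V s i, i < P s; c s i are the
  components of c_s. This is the Euclidean norm of V_s x - c_s.\<close>
definition resid_norm :: "(nat \<Rightarrow> real ^ 'n) \<Rightarrow> (nat \<Rightarrow> real) \<Rightarrow> nat \<Rightarrow> real ^ 'n \<Rightarrow> real" where
  "resid_norm Vs cs p x = sqrt (\<Sum>i<p. (Vs i \<bullet> x - cs i)\<^sup>2)"

definition F_obj ::
  "(real ^ 'q \<Rightarrow> real) \<Rightarrow> real ^ 'n ^ 'q \<Rightarrow> real ^ 'q \<Rightarrow> real ^ 'n ^ 'm
   \<Rightarrow> nat \<Rightarrow> (nat \<Rightarrow> nat) \<Rightarrow> (nat \<Rightarrow> nat \<Rightarrow> real ^ 'n) \<Rightarrow> (nat \<Rightarrow> nat \<Rightarrow> real)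
   \<Rightarrow> (nat \<Rightarrow> real \<Rightarrow> real \<Rightarrow> real) \<Rightarrow> real \<Rightarrow> real ^ 'n \<Rightarrow> real" where
  "F_obj Phi H y V0 S P V c psi \<delta> x =
     Phi (H *v x - y) + (\<Sum>s=1..S. psi s \<delta> (resid_norm (V s) (c s) (P s) x))
     + (norm (V0 *v x))\<^sup>2"

definition coercive :: "('a::real_normed_vector \<Rightarrow> real) \<Rightarrow> bool" where
  "coercive f \<longleftrightarrow> filterlim f at_top at_infinity"

end

theory Submission
  imports Defs
begin

lemma coercive_iff:
  fixes f :: "'a::real_normed_vector \<Rightarrow> real"
  shows "coercive f \<longleftrightarrow> (\<forall>M. \<exists>R. \<forall>x. R \<le> norm x \<longrightarrow> M \<le> f x)"
  unfolding coercive_def filterlim_at_top eventually_at_infinity by blast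

lemma coercive_bdd_below:
  fixes f :: "'a::euclidean_space \<Rightarrow> real"
  assumes "continuous_on UNIV f" "coercive f"
  shows "\<exists>m. \<forall>z. m \<le> f z"
proof -
  obtain R where R: "\<And>x. R \<le> norm x \<Longrightarrow> 0 \<le> f x"
    using assms(2) unfolding coercive_iff by blast
  have "cball 0 (max R 0) \<noteq> {}" by auto
  then obtain x0 where x0: "\<forall>y\<in>cball 0 (max R 0). f x0 \<le> f y"
    using continuous_attains_inf[OF compact_cball _ continuous_on_subset[OF assms(1)]] by blast
  have "min (f x0) 0 \<le> f z" for z
  proof (cases "R \<le> norm z")
    case True then show ?thesis using R by force
  next
    case False
    then have "z \<in> cball 0 (max R 0)" by auto
    then show ?thesis using x0 by force
  qed
  then show ?thesis by blast
qed

lemma coercive_argmin: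
  fixes f :: "'a::euclidean_space \<Rightarrow> real"
  assumes "continuous_on UNIV f" "coercive f"
  shows "{x. \<forall>z. f x \<le> f z} \<noteq> {} \<and> compact {x. \<forall>z. f x \<le> f z}"
proof -
  obtain R where R: "\<And>x. R \<le> norm x \<Longrightarrow> f 0 + 1 \<le> f x"
    using assms(2) unfolding coercive_iff by blast
  define K where "K = {x. f x \<le> f 0}"
  have Kb: "K \<subseteq> cball 0 R"
  proof
    fix x assume "x \<in> K"
    then have "norm x < R" using R[of x] unfolding K_def by force
    then show "x \<in> cball 0 R" by simp
  qed
  have Kc: "closed K" unfolding K_def
    by (intro closed_Collect_le continuous_on_const assms(1))
  have cK: "compact K" using Kb Kc bounded_cball bounded_subset compact_eq_bounded_closed by blast
  have "K \<noteq> {}" unfolding K_def by auto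
  then obtain x0 where x0K: "x0 \<in> K" and x0: "\<forall>y\<in>K. f x0 \<le> f y"
    using continuous_attains_inf[OF cK _ continuous_on_subset[OF assms(1)]] by blast
  have min: "f x0 \<le> f z" for z
    using x0 x0K by (cases "z \<in> K") (auto simp: K_def)
  have eq: "{x. \<forall>z. f x \<le> f z} = {x. f x \<le> f x0}"
    using min order_trans by blast
  have "{x. f x \<le> f x0} \<subseteq> K" using x0K unfolding K_def by auto
  moreover have "closed {x. f x \<le> f x0}"
    by (intro closed_Collect_le continuous_on_const assms(1))
  ultimately have "compact {x. f x \<le> f x0}"
    using Kb bounded_cball bounded_subset compact_eq_bounded_closed by blast
  then show ?thesis unfolding eq by auto
qed

theorem proposition1:
  fixes Phi :: "real ^ 'q \<Rightarrow> real"
    and H :: "real ^ 'n ^ 'q" and y :: "real ^ 'q"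
    and V0 :: "real ^ 'n ^ 'm"
    and S :: nat and P :: "nat \<Rightarrow> nat"
    and V :: "nat \<Rightarrow> nat \<Rightarrow> real ^ 'n" and c :: "nat \<Rightarrow> nat \<Rightarrow> real"
    and psi :: "nat \<Rightarrow> real \<Rightarrow> real \<Rightarrow> real"
  assumes "S \<ge> 1"
    and "\<forall>s\<in>{1..S}. P s \<ge> 1"
    and "H \<noteq> 0"
    and "continuous_on UNIV Phi"
    and "coercive Phi"
    and "\<forall>\<delta>>0. \<forall>s\<in>{1..S}. continuous_on UNIV (psi s \<delta>) \<and> (\<forall>t. psi s \<delta> t \<ge> 0)"
    and "{x. H *v x = 0} \<inter> {x. V0 *v x = 0} = {0}"
  shows "\<forall>\<delta>>0. coercive (F_obj Phi H y V0 S P V c psi \<delta>) \<and>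
           {x. \<forall>z. F_obj Phi H y V0 S P V c psi \<delta> x \<le> F_obj Phi H y V0 S P V c psi \<delta> z} \<noteq> {} \<and>
           compact {x. \<forall>z. F_obj Phi H y V0 S P V c psi \<delta> x \<le> F_obj Phi H y V0 S P V c psi \<delta> z}"
proof (intro allI impI)
  fix \<delta> :: real assume d: "\<delta> > 0"
  let ?F = "F_obj Phi H y V0 S P V c psi \<delta>"
  have psi: "\<And>s. s \<in> {1..S} \<Longrightarrow> continuous_on UNIV (psi s \<delta>) \<and> (\<forall>t. psi s \<delta> t \<ge> 0)"
    using assms(6) d by blast
  define g where "g x = (H *v x, V0 *v x)" for x
  have lg: "linear g" unfolding g_def
    by (intro bounded_linear.linear bounded_linear_Pair matrix_vector_mul_bounded_linear)
  have ig: "inj g"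
    unfolding linear_injective_0[OF lg]
  proof (intro allI impI)
    fix x assume "g x = 0"
    then have "H *v x = 0" "V0 *v x = 0" by (simp_all add: g_def zero_prod_def)
    then have "x \<in> {x. H *v x = 0} \<inter> {x. V0 *v x = 0}" by blast
    then show "x = 0" using assms(7) by blast
  qed
  obtain B where B0: "B > 0" and B: "\<And>x. B * norm x \<le> norm (g x)"
    using linear_inj_bounded_below_pos[OF lg ig] by blast
  have B2: "B * norm x \<le> norm (H *v x) + norm (V0 *v x)" for x
    using B[of x] norm_Pair_le[of "H *v x" "V0 *v x"] unfolding g_def by linarith
  obtain m where m: "\<And>z. m \<le> Phi z" using coercive_bdd_below[OF assms(4,5)] by blast
  have sumpos: "0 \<le> (\<Sum>s=1..S. psi s \<delta> (resid_norm (V s) (c s) (P s) x))" for x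
    by (intro sum_nonneg) (use psi in auto)
  have coer: "coercive ?F"
    unfolding coercive_iff
  proof
    fix M
    obtain R where R: "\<And>z. R \<le> norm z \<Longrightarrow> M \<le> Phi z"
      using assms(5) unfolding coercive_iff by blast
    show "\<exists>T. \<forall>x::real^'n. T \<le> norm x \<longrightarrow> M \<le> ?F x"
    proof (intro exI allI impI)
      fix x :: "real^'n" assume x: "(\<bar>R\<bar> + norm y + \<bar>M - m\<bar> + 1) / B \<le> norm x"
      have Bx: "\<bar>R\<bar> + norm y + \<bar>M - m\<bar> + 1 \<le> B * norm x"
        using x B0 by (simp add: divide_le_eq mult.commute)
      show "M \<le> ?F x"
      proof (cases "R \<le> norm (H *v x - y)")
        case True
        then show ?thesis using R[OF True] sumpos[of x]
          unfolding F_obj_def by (smt (verit) zero_le_power2)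
      next
        case False
        have "norm (H *v x) \<le> norm (H *v x - y) + norm y"
          by (metis diff_add_cancel norm_triangle_ineq)
        then have "\<bar>M - m\<bar> + 1 \<le> norm (V0 *v x)" using False Bx B2[of x] by linarith
        then have t1: "1 \<le> norm (V0 *v x)" and t2: "M - m \<le> norm (V0 *v x)" by linarith+
        have "norm (V0 *v x) * 1 \<le> norm (V0 *v x) * norm (V0 *v x)"
          using t1 by (intro mult_left_mono) auto
        then have v: "M - m \<le> (norm (V0 *v x))\<^sup>2"
          using t2 by (simp add: power2_eq_square)
        then show ?thesis using m[of "H *v x - y"] sumpos[of x]
          unfolding F_obj_def by linarith
      qed
    qed
  qed
  have cont: "continuous_on UNIV ?F"
  proof -
    have c1: "continuous_on UNIV (\<lambda>x. Phi (H *v x - y))"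
    proof (rule continuous_on_compose2[OF assms(4)])
      have "continuous_on UNIV (\<lambda>x. H *v x)"
        by (rule linear_continuous_on[OF matrix_vector_mul_bounded_linear])
      then show "continuous_on UNIV (\<lambda>x. H *v x - y)"
        by (intro continuous_on_diff continuous_on_const)
    qed auto
    have cr: "continuous_on UNIV (resid_norm (V s) (c s) (P s))" for s
      unfolding resid_norm_def by (intro continuous_intros)
    have c2: "continuous_on UNIV (\<lambda>x. \<Sum>s=1..S. psi s \<delta> (resid_norm (V s) (c s) (P s) x))"
      by (intro continuous_on_sum, rule continuous_on_compose2[OF _ cr]) (use psi in auto)
    have c3: "continuous_on UNIV (\<lambda>x. (norm (V0 *v x))\<^sup>2)"
      by (intro continuous_intros linear_continuous_on matrix_vector_mul_bounded_linear)
    show ?thesis unfolding F_obj_def[abs_def] by (intro continuous_on_add c1 c2 c3)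
  qed
  show "coercive ?F \<and> {x. \<forall>z. ?F x \<le> ?F z} \<noteq> {} \<and> compact {x. \<forall>z. ?F x \<le> ?F z}"
    using coer coercive_argmin[OF cont coer] by blast
qed

end
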